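(* Let $a>0$, let $\psi\in C^2([0,a])$ with $\psi>0$ on $[0,a]$, let $0<R_1<R_2<a$, let $\beta>0$, set $\overline B:=\max_{[0,a]}\big|(\psi'/\psi)'\big|$, and for $B>\overline B$ let $z_1=z_1(r,B)$ be the solution of $$\Big[\frac{(\psi z)'}{\psi}\Big]'-Bz=0\ \text{ in }[0,R_1),\qquad z(0)=0,\ z'(0)=1,$$ and $z_2=z_2(r,B,\beta)$ the solution of $$\Big[\frac{(\psi z)'}{\psi}\Big]'-Bz=0\ \text{ in }(R_2,a],\qquad z(a)=\beta,\ z'(a)=-1.$$ Then: (i) $z_1>0$ in $(0,R_1)$; (ii) $z_1(\cdot,B)$ is increasing in $[0,R_1)$ for any $B>\overline B$; (iii) $B\mapsto z_1(r,B)$ is increasing on $(\overline B,\infty)$ for any $r\in(0,R_1)$; (iv) $\lim_{B\to\infty}z_1(r,B)=\infty$ for any $r\in(0,R_1)$. Similarly: (i') $z_2>\beta$ in $(R_2,a)$; (ii') $z_2(\cdot,B)$ is decreasing in $(R_2,a)$ for any $B>\overline B$; (iii') $B\mapsto z_2(r,B)$ is increasing on $(\overline B,\infty)$ for any $r\in(R_2,a)$; (iv') $\lim_{B\to\infty}z_2(r,B)=\infty$ for any $r\in(R_2,a)$.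
   Context: The differential equation can be written equivalently as $z''+\frac{\psi'}{\psi}z'+\big[(\psi'/\psi)'-B\big]z=0$. *)

theory Defs
  imports "HOL-Analysis.Analysis"
begin

end

theory Submission
  imports Defs
begin


lemma at_deriv:
  assumes "s \<in> {0<..<R}" "(f has_real_derivative f') (at s within {0..<R})"
  shows "(f has_real_derivative f') (at s)"
proof -
  have sub: "{0<..<R} \<subseteq> {0..<R}" by (rule subsetI) simp
  have "(f has_real_derivative f') (at s within {0<..<R})"
    by (rule has_field_derivative_subset[OF assms(2) sub])
  moreover have "at s within {0<..<R} = at s"
    by (rule at_within_open[OF assms(1) open_greaterThanLessThan])
  ultimately show ?thesis by (simp only:)
qed

lemma mono_helper:
  assumes "0 \<le> x" "x \<le> u" "u < R"
    and d: "\<And>s. s \<in> {0..<R} \<Longrightarrow> (f has_real_derivative f' s) (at s within {0..<R})"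
    and nn: "\<And>s. x < s \<Longrightarrow> s < u \<Longrightarrow> f' s \<ge> 0"
  shows "f x \<le> f u"
proof (rule DERIV_nonneg_imp_increasing_open[OF assms(2)])
  fix s assume xs: "x < s" "s < u"
  hence s: "s \<in> {0<..<R}" and s': "s \<in> {0..<R}" using assms by auto
  have "(f has_real_derivative f' s) (at s)" by (rule at_deriv[OF s d[OF s']])
  thus "\<exists>y. DERIV f s :> y \<and> 0 \<le> y" using nn[OF xs] by blast
next
  have "continuous_on {0..<R} f" unfolding continuous_on_eq_continuous_within
  proof
    fix s assume "s \<in> {0..<R}"
    from DERIV_continuous[OF d[OF this]] show "continuous (at s within {0..<R}) f" .
  qed
  moreover have "{x..u} \<subseteq> {0..<R}" using assms by auto
  ultimately show "continuous_on {x..u} f" by (rule continuous_on_subset)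
qed

lemma smono_helper:
  assumes "0 \<le> x" "x < u" "u < R"
    and d: "\<And>s. s \<in> {0..<R} \<Longrightarrow> (f has_real_derivative f' s) (at s within {0..<R})"
    and nn: "\<And>s. x < s \<Longrightarrow> s < u \<Longrightarrow> f' s > 0"
  shows "f x < f u"
proof (rule DERIV_pos_imp_increasing_open[OF assms(2)])
  fix s assume xs: "x < s" "s < u"
  hence s: "s \<in> {0<..<R}" and s': "s \<in> {0..<R}" using assms by auto
  have "(f has_real_derivative f' s) (at s)" by (rule at_deriv[OF s d[OF s']])
  thus "\<exists>y. DERIV f s :> y \<and> 0 < y" using nn[OF xs] by blast
next
  have "continuous_on {0..<R} f" unfolding continuous_on_eq_continuous_within
  proof
    fix s assume "s \<in> {0..<R}"
    from DERIV_continuous[OF d[OF this]] show "continuous (at s within {0..<R}) f" .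
  qed
  moreover have "{x..u} \<subseteq> {0..<R}" using assms by auto
  ultimately show "continuous_on {x..u} f" by (rule continuous_on_subset)
qed

definition sol :: "real \<Rightarrow> (real\<Rightarrow>real) \<Rightarrow> (real\<Rightarrow>real) \<Rightarrow> (real\<Rightarrow>real) \<Rightarrow> (real\<Rightarrow>real) \<Rightarrow> real \<Rightarrow> bool" where
"sol R \<phi> Q y D y0 \<longleftrightarrow> 0 < R \<and> 0 \<le> y0 \<and> y 0 = y0 \<and> D 0 = 1 \<and>
  (\<forall>s\<in>{0..<R}. \<phi> s > 0 \<and> Q s > 0 \<and> (y has_real_derivative D s) (at s within {0..<R}) \<and>
     ((\<lambda>s. \<phi> s * D s) has_real_derivative \<phi> s * Q s * y s) (at s within {0..<R}))"

lemma sol_basic: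
  assumes "sol R \<phi> Q y D y0"
  shows "\<forall>s\<in>{0..<R}. D s > 0"
proof (rule ccontr)
  define g where "g = (\<lambda>s. \<phi> s * D s)"
  note A = assms[unfolded sol_def]
  have yd: "\<And>s. s \<in> {0..<R} \<Longrightarrow> (y has_real_derivative D s) (at s within {0..<R})"
    and gd: "\<And>s. s \<in> {0..<R} \<Longrightarrow> (g has_real_derivative \<phi> s * Q s * y s) (at s within {0..<R})"
    and ph: "\<And>s. s \<in> {0..<R} \<Longrightarrow> \<phi> s > 0" and Qp: "\<And>s. s \<in> {0..<R} \<Longrightarrow> Q s > 0"
    using A unfolding g_def by auto
  have Dg: "D s > 0 \<longleftrightarrow> g s > 0" if "s \<in> {0..<R}" for s
    using ph[OF that] unfolding g_def by (simp add: zero_less_mult_iff)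
  assume "\<not> (\<forall>s\<in>{0..<R}. D s > 0)"
  then obtain s0 where s0: "s0 \<in> {0..<R}" "g s0 \<le> 0" using Dg by force
  define S where "S = {s\<in>{0..<R}. g s \<le> 0}"
  define t where "t = Inf S"
  have Sne: "S \<noteq> {}" using s0 S_def by auto
  have bdd: "bdd_below S" unfolding S_def by (rule bdd_belowI[of _ 0]) auto
  have t0: "0 \<le> t" unfolding t_def using Sne by (rule cInf_greatest) (auto simp: S_def)
  have tR: "t < R" using cInf_lower[OF _ bdd, of s0] s0 unfolding t_def S_def by auto
  have below: "g s > 0" if "s \<in> {0..<t}" for s
  proof (rule ccontr)
    assume "\<not> g s > 0"
    hence "s \<in> S" using that tR unfolding S_def by auto
    hence "t \<le> s" unfolding t_def using bdd by (rule cInf_lower)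
    thus False using that by auto
  qed
  have gt: "g t > 0"
  proof (cases "t = 0")
    case True thus ?thesis using A unfolding g_def by auto
  next
    case False
    hence tpos: "t > 0" using t0 by auto
    have ynn: "y u \<ge> y0" if "u \<in> {0..t}" for u
    proof -
      have "y 0 \<le> y u"
      proof (rule mono_helper[where R=R and f=y and f' = D and x=0 and u=u])
        fix s assume "0 < s" "s < u"
        thus "0 \<le> D s" using Dg[of s] below[of s] that tR by auto
      qed (use that tR yd in auto)
      thus ?thesis using A by auto
    qed
    have "g 0 \<le> g t"
    proof (rule mono_helper[where R=R and f=g and x=0 and u=t and f' = "\<lambda>s. \<phi> s * Q s * y s"])
      fix s assume "0 < s" "s < t"
      hence s: "s \<in> {0..<R}" "s \<in> {0..t}" using tR by auto
      have "y s \<ge> 0" using ynn[OF s(2)] A by auto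
      thus "0 \<le> \<phi> s * Q s * y s" using ph[OF s(1)] Qp[OF s(1)] by simp
    qed (use tR gd t0 in auto)
    moreover have "g 0 > 0" using A unfolding g_def by auto
    ultimately show ?thesis by auto
  qed
  have "continuous (at t within {0..<R}) g"
    using gd[of t] t0 tR by (auto intro: DERIV_continuous)
  hence "eventually (\<lambda>s. g s > 0) (at t within {0..<R})"
    using gt by (simp add: continuous_within order_tendstoD(1))
  then obtain d where d: "d > 0" "\<And>s. s \<in> {0..<R} \<Longrightarrow> 0 < dist s t \<Longrightarrow> dist s t < d \<Longrightarrow> g s > 0"
    unfolding eventually_at by auto
  obtain s where s: "s \<in> S" "s < t + d" using cInf_less_iff[OF Sne bdd, of "t+d"] d unfolding t_def by auto
  have "t \<le> s" using s bdd unfolding t_def by (auto intro: cInf_lower)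
  moreover have "s \<noteq> t" using s gt unfolding S_def by auto
  ultimately have "g s > 0" using d s unfolding S_def by (auto simp: dist_real_def)
  thus False using s unfolding S_def by auto
qed

lemma sol_mono:
  assumes "sol R \<phi> Q y D y0"
  shows "strict_mono_on {0..<R} y" "\<forall>s\<in>{0<..<R}. y s > y0" "\<forall>s\<in>{0..<R}. y s \<ge> y0"
proof -
  note A = assms[unfolded sol_def]
  note Dp = sol_basic[OF assms]
  show sm: "strict_mono_on {0..<R} y"
  proof (rule strict_mono_onI)
    fix x u assume xu: "x \<in> {0..<R}" "u \<in> {0..<R}" "x < u"
    have yd: "\<And>s. s \<in> {0..<R} \<Longrightarrow> (y has_real_derivative D s) (at s within {0..<R})"
      using A by blast
    show "y x < y u"
    proof (rule smono_helper[where R=R and f=y and f'=D and x=x and u=u, OF _ _ _ yd])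
      fix s assume "x < s" "s < u" 
      hence "s \<in> {0..<R}" using xu by auto
      thus "D s > 0" using Dp by blast
    qed (use xu in auto)
  qed
  have R0: "y 0 = y0" "0 < R" using A by auto
  show "\<forall>s\<in>{0<..<R}. y s > y0"
  proof
    fix s assume "s \<in> {0<..<R}"
    hence "y 0 < y s" by (intro strict_mono_onD[OF sm]) auto
    thus "y s > y0" using R0 by simp
  qed
  show "\<forall>s\<in>{0..<R}. y s \<ge> y0"
  proof
    fix s assume s: "s \<in> {0..<R}"
    show "y s \<ge> y0"
    proof (cases "s = 0")
      case True thus ?thesis using R0 by simp
    next
      case False
      hence "y 0 < y s" using s R0 by (intro strict_mono_onD[OF sm]) auto
      thus ?thesis using R0 by simp
    qed
  qed
qed

lemma sol_cmp:
  assumes S1: "sol R \<phi> Q1 y1 D1 y0" and S2: "sol R \<phi> Q2 y2 D2 y0"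
    and QQ: "\<And>s. s \<in> {0..<R} \<Longrightarrow> Q1 s < Q2 s"
  shows "\<forall>r\<in>{0<..<R}. y1 r < y2 r"
proof
  note A1 = S1[unfolded sol_def] and A2 = S2[unfolded sol_def]
  have y1d: "\<And>s. s \<in> {0..<R} \<Longrightarrow> (y1 has_real_derivative D1 s) (at s within {0..<R})"
    and g1d: "\<And>s. s \<in> {0..<R} \<Longrightarrow> ((\<lambda>s. \<phi> s * D1 s) has_real_derivative \<phi> s * Q1 s * y1 s) (at s within {0..<R})"
    and y2d: "\<And>s. s \<in> {0..<R} \<Longrightarrow> (y2 has_real_derivative D2 s) (at s within {0..<R})"
    and g2d: "\<And>s. s \<in> {0..<R} \<Longrightarrow> ((\<lambda>s. \<phi> s * D2 s) has_real_derivative \<phi> s * Q2 s * y2 s) (at s within {0..<R})"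
    and ph: "\<And>s. s \<in> {0..<R} \<Longrightarrow> \<phi> s > 0"
    using A1 A2 by blast+
  have R0: "0 < R" "y1 0 = y0" "y2 0 = y0" "D1 0 = 1" "D2 0 = 1" "0 \<le> y0"
    using A1 A2 by blast+
  have y1p: "y1 s > 0" if "s \<in> {0<..<R}" for s
  proof -
    have "y0 < y1 s" using sol_mono(2)[OF S1] that by blast
    thus ?thesis using R0 by linarith
  qed
  have y2p: "y2 s > 0" if "s \<in> {0<..<R}" for s
  proof -
    have "y0 < y2 s" using sol_mono(2)[OF S2] that by blast
    thus ?thesis using R0 by linarith
  qed
  define W where "W = (\<lambda>s. (\<phi> s * D2 s) * y1 s - y2 s * (\<phi> s * D1 s))"
  have Wd: "(W has_real_derivative \<phi> s * (Q2 s - Q1 s) * y1 s * y2 s) (at s within {0..<R})"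
    if "s \<in> {0..<R}" for s
    unfolding W_def
    by (rule DERIV_cong[OF DERIV_diff[OF DERIV_mult[OF g2d[OF that] y1d[OF that]] DERIV_mult[OF y2d[OF that] g1d[OF that]]]])
       (simp add: algebra_simps)
  have W0: "W 0 = 0" using R0 unfolding W_def by simp
  have Wp: "W s > 0" if "s \<in> {0<..<R}" for s
  proof -
    have "W 0 < W s"
      by (rule smono_helper[where R=R and f=W and x=0 and u=s, OF _ _ _ Wd])
         (use that ph QQ y1p y2p in auto)
    thus ?thesis using W0 by simp
  qed
  define h where "h = (\<lambda>s. (y2 s - y1 s) / y1 s)"
  have hd: "DERIV h s :> ((D2 s - D1 s) * y1 s - (y2 s - y1 s) * D1 s) / (y1 s * y1 s)"
    if "s \<in> {0<..<R}" for s
    unfolding h_def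
    by (rule DERIV_divide[OF DERIV_diff]) 
       (use that y1p[OF that] at_deriv[OF that y1d] at_deriv[OF that y2d] in auto)
  have hdp: "((D2 s - D1 s) * y1 s - (y2 s - y1 s) * D1 s) / (y1 s * y1 s) > 0"
    if "s \<in> {0<..<R}" for s
  proof -
    have "W s = \<phi> s * ((D2 s - D1 s) * y1 s - (y2 s - y1 s) * D1 s)"
      unfolding W_def by (simp add: algebra_simps)
    hence "(D2 s - D1 s) * y1 s - (y2 s - y1 s) * D1 s > 0"
      using Wp[OF that] ph[of s] that by (simp add: zero_less_mult_iff)
    thus ?thesis using y1p[OF that] by simp
  qed
  have hinc: "h x < h u" if "0 < x" "x < u" "u < R" for x u
  proof (rule DERIV_pos_imp_increasing_open[OF that(2)])
    fix s assume "x < s" "s < u"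
    thus "\<exists>y. DERIV h s :> y \<and> 0 < y" using hd hdp that by force
  next
    show "continuous_on {x..u} h"
    proof (rule continuous_at_imp_continuous_on, rule ballI)
      fix s assume "s \<in> {x..u}"
      hence "s \<in> {0<..<R}" using that by auto
      from DERIV_isCont[OF hd[OF this]] show "isCont h s" .
    qed
  qed
  have mem0: "(0::real) \<in> {0..<R}" using R0 by simp
  have filt: "at_right 0 = at (0::real) within {0..<R}"
  proof (rule at_within_nhd[where S="{..<R}"])
    show "(0::real) \<in> {..<R}" using R0 by simp
    show "{0<..} \<inter> {..<R} - {0} = {0..<R} \<inter> {..<R} - {(0::real)}" by auto
  qed simp
  have lim0: "(h \<longlongrightarrow> 0) (at 0 within {0..<R})"
  proof (cases "y0 = 0")
    case True
    have l1: "((\<lambda>s. (y1 s - y1 0) / (s - 0)) \<longlongrightarrow> D1 0) (at 0 within {0..<R})"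
      using y1d[OF mem0] unfolding has_field_derivative_iff .
    have l2: "((\<lambda>s. (y2 s - y2 0) / (s - 0)) \<longlongrightarrow> D2 0) (at 0 within {0..<R})"
      using y2d[OF mem0] unfolding has_field_derivative_iff .
    have "((\<lambda>s. ((y2 s - y2 0) / (s - 0) - (y1 s - y1 0) / (s - 0)) / ((y1 s - y1 0) / (s - 0)))
       \<longlongrightarrow> (D2 0 - D1 0) / D1 0) (at 0 within {0..<R})"
      by (rule tendsto_divide[OF tendsto_diff[OF l2 l1] l1]) (use R0 in simp)
    moreover have "(D2 0 - D1 0) / D1 0 = 0" using R0 by simp
    ultimately have l3: "((\<lambda>s. ((y2 s - y2 0) / (s - 0) - (y1 s - y1 0) / (s - 0)) / ((y1 s - y1 0) / (s - 0)))
       \<longlongrightarrow> 0) (at 0 within {0..<R})" by (simp only:)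
    show ?thesis
    proof (rule Lim_transform_eventually[OF l3])
      have "eventually (\<lambda>s. s \<noteq> 0) (at (0::real) within {0..<R})"
        by (rule eventually_at_filter[THEN iffD2]) (rule always_eventually, blast)
      thus "\<forall>\<^sub>F x in at 0 within {0..<R}. ((y2 x - y2 0) / (x - 0) - (y1 x - y1 0) / (x - 0)) / ((y1 x - y1 0) / (x - 0)) = h x"
      proof eventually_elim
        case (elim x)
        have "((y2 x) / x - (y1 x) / x) / ((y1 x) / x) = h x"
        proof (cases "y1 x = 0")
          case True thus ?thesis unfolding h_def by simp
        next
          case False thus ?thesis unfolding h_def using elim by (simp add: field_simps)
        qed
        moreover have "y1 0 = 0" "y2 0 = 0" using R0 True by simp_all
        ultimately show ?case by simp
      qed
    qed
  next
    case False
    hence y0p: "y1 0 \<noteq> 0" using R0 by auto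
    have c1: "(y1 \<longlongrightarrow> y1 0) (at 0 within {0..<R})"
      using DERIV_continuous[OF y1d[OF mem0]] unfolding continuous_within .
    have c2: "(y2 \<longlongrightarrow> y2 0) (at 0 within {0..<R})"
      using DERIV_continuous[OF y2d[OF mem0]] unfolding continuous_within .
    have "((\<lambda>s. (y2 s - y1 s) / y1 s) \<longlongrightarrow> (y2 0 - y1 0) / y1 0) (at 0 within {0..<R})"
      by (rule tendsto_divide[OF tendsto_diff[OF c2 c1] c1 y0p])
    moreover have "(y2 0 - y1 0) / y1 0 = 0" using R0 by simp
    ultimately show ?thesis unfolding h_def by (simp only:)
  qed
  have lim: "(h \<longlongrightarrow> 0) (at_right 0)" using lim0 unfolding filt .
  fix r assume r: "r \<in> {0<..<R}"
  have "eventually (\<lambda>s. h s \<le> h (r/2)) (at_right 0)"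
    unfolding eventually_at_right_field
    by (rule exI[of _ "r/2"]) (use r hinc in \<open>auto intro: less_imp_le\<close>)
  hence "0 \<le> h (r/2)" using lim by (intro tendsto_upperbound) auto
  moreover have "h (r/2) < h r" using hinc[of "r/2" r] r by auto
  ultimately have "h r > 0" by simp
  thus "y1 r < y2 r" using y1p[OF r] unfolding h_def by (simp add: zero_less_divide_iff)
qed

lemma sol_lower:
  assumes S: "sol R \<phi> Q y D y0" and m: "0 < m" and c: "0 \<le> c"
    and bnd: "\<And>s. s \<in> {0..<R} \<Longrightarrow> m \<le> \<phi> s \<and> \<phi> s \<le> M \<and> c \<le> Q s"
  shows "\<forall>r\<in>{0..<R}. y r \<ge> c * m^2 / (6 * M^2) * r^3"
proof
  note A = S[unfolded sol_def]
  define g where "g = (\<lambda>s. \<phi> s * D s)"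
  have yd: "\<And>s. s \<in> {0..<R} \<Longrightarrow> (y has_real_derivative D s) (at s within {0..<R})"
    and gd: "\<And>s. s \<in> {0..<R} \<Longrightarrow> (g has_real_derivative \<phi> s * Q s * y s) (at s within {0..<R})"
    and ph: "\<And>s. s \<in> {0..<R} \<Longrightarrow> \<phi> s > 0"
    using A unfolding g_def by blast+
  have R0: "R > 0" "0 \<le> y0" "y 0 = y0" "D 0 = 1" using A by blast+
  have mM: "m \<le> M" using bnd[of 0] R0 by auto
  hence Mp: "M > 0" using m by simp
  define k where "k = m / M"
  have kp: "k > 0" unfolding k_def using m Mp by simp
  have ynn: "y s \<ge> 0" if "s \<in> {0..<R}" for s
    using sol_mono(3)[OF S] that R0 by fastforce
  have Dlow: "D s \<ge> a / M" if s: "s \<in> {0..<R}" and a: "a \<ge> 0" "g s \<ge> a" for s a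
  proof -
    have "a / M \<le> a / \<phi> s" by (rule divide_left_mono) (use bnd[OF s] ph[OF s] a in auto)
    also have "a / \<phi> s \<le> D s" using a ph[OF s] unfolding g_def by (simp add: pos_divide_le_eq mult.commute)
    finally show ?thesis .
  qed
  have g1: "g s \<ge> m" if s: "s \<in> {0..<R}" for s
  proof -
    have "g 0 \<le> g s"
    proof (rule mono_helper[where R=R and f=g and x=0 and u=s and f'="\<lambda>s. \<phi> s * Q s * y s", OF _ _ _ gd])
      fix u assume "0 < u" "u < s"
      hence u: "u \<in> {0..<R}" using s by auto
      show "0 \<le> \<phi> u * Q u * y u" using ph[OF u] bnd[OF u] ynn[OF u] c by simp
    qed (use s in auto)
    moreover have "g 0 \<ge> m" using bnd[of 0] R0 unfolding g_def by auto
    ultimately show ?thesis by simp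
  qed
  have D1: "D s \<ge> k" if s: "s \<in> {0..<R}" for s
    using Dlow[OF s _ g1[OF s]] m unfolding k_def by simp
  have y1: "y s \<ge> k * s" if s: "s \<in> {0..<R}" for s
  proof -
    have "y 0 - k * 0 \<le> y s - k * s"
    proof (rule mono_helper[where R=R and f="\<lambda>s. y s - k * s" and x=0 and u=s and f'="\<lambda>s. D s - k"])
      fix u assume "u \<in> {0..<R}"
      thus "((\<lambda>s. y s - k * s) has_real_derivative D u - k) (at u within {0..<R})"
        by (rule DERIV_cong[OF DERIV_diff[OF yd DERIV_cmult[OF DERIV_ident]]]) simp
    next
      fix u assume "0 < u" "u < s"
      thus "0 \<le> D u - k" using D1[of u] s by auto
    qed (use s in auto)
    thus ?thesis using R0 by simp
  qed
  have g2: "g s \<ge> m * c * k * s^2 / 2" if s: "s \<in> {0..<R}" for s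
  proof -
    have "g 0 - m * c * k * 0^2 / 2 \<le> g s - m * c * k * s^2 / 2"
    proof (rule mono_helper[where R=R and f="\<lambda>s. g s - m * c * k * s^2 / 2" and x=0 and u=s
          and f'="\<lambda>s. \<phi> s * Q s * y s - m * c * k * s"])
      fix u assume "u \<in> {0..<R}"
      thus "((\<lambda>s. g s - m * c * k * s^2 / 2) has_real_derivative \<phi> u * Q u * y u - m * c * k * u) (at u within {0..<R})"
        by (rule DERIV_cong[OF DERIV_diff[OF gd DERIV_cdivide[OF DERIV_cmult[OF DERIV_pow]]]]) simp
    next
      fix u assume "0 < u" "u < s"
      hence u: "u \<in> {0..<R}" using s by auto
      have b: "m \<le> \<phi> u" "c \<le> Q u" "k * u \<le> y u" using bnd[OF u] y1[OF u] by auto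
      have "m * c \<le> \<phi> u * Q u" by (rule mult_mono) (use b m c in auto)
      moreover have "0 \<le> k * u" using kp u by simp
      ultimately have "m * c * (k * u) \<le> \<phi> u * Q u * y u"
        using ph[OF u] bnd[OF u] c b(3) by (intro mult_mono) auto
      thus "0 \<le> \<phi> u * Q u * y u - m * c * k * u" by (simp add: mult.assoc)
    qed (use s in auto)
    moreover have "g 0 > 0" using ph[of 0] R0 unfolding g_def by auto
    ultimately show ?thesis by simp
  qed
  have D2: "D s \<ge> m * c * k * s^2 / 2 / M" if s: "s \<in> {0..<R}" for s
    by (rule Dlow[OF s _ g2[OF s]]) (use m c kp in auto)
  define K where "K = c * m^2 / (6 * M^2)"
  have K3: "3 * K = m * c * k / M / 2" unfolding K_def k_def using Mp by (simp add: power2_eq_square field_simps)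
  fix r assume r: "r \<in> {0..<R}"
  have "y 0 - K * 0^3 \<le> y r - K * r^3"
  proof (rule mono_helper[where R=R and f="\<lambda>s. y s - K * s^3" and x=0 and u=r
        and f'="\<lambda>s. D s - 3 * K * s^2"])
    fix u assume "u \<in> {0..<R}"
    thus "((\<lambda>s. y s - K * s^3) has_real_derivative D u - 3 * K * u^2) (at u within {0..<R})"
      by (rule DERIV_cong[OF DERIV_diff[OF yd DERIV_cmult[OF DERIV_pow]]]) simp
  next
    fix u assume "0 < u" "u < r"
    hence u: "u \<in> {0..<R}" using r by auto
    have "m * c * k / M / 2 * u^2 = m * c * k * u^2 / 2 / M" by simp
    thus "0 \<le> D u - 3 * K * u^2" using D2[OF u] K3 by simp
  qed (use r in auto)
  hence "K * r^3 \<le> y r" using R0 by simp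
  thus "y r \<ge> c * m^2 / (6 * M^2) * r^3" unfolding K_def .
qed


lemma refl_deriv:
  assumes "(f has_real_derivative f') (at (a - s) within {R2<..a})" "s \<in> {0..<a-R2}"
  shows "((\<lambda>s. f (a - s)) has_real_derivative - f') (at s within {0..<a-R2})"
proof -
  have img: "(\<lambda>s. a - s) ` {0..<a-R2} = {R2<..a}"
  proof (rule set_eqI)
    fix x show "x \<in> (\<lambda>s. a - s) ` {0..<a-R2} \<longleftrightarrow> x \<in> {R2<..a}"
    proof
      assume "x \<in> {R2<..a}"
      hence "a - x \<in> {0..<a-R2}" "x = a - (a - x)" by auto
      thus "x \<in> (\<lambda>s. a - s) ` {0..<a-R2}" by (rule rev_image_eqI)
    qed auto
  qed
  have dg: "((\<lambda>s. a - s) has_real_derivative -1) (at s within {0..<a-R2})"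
    by (rule DERIV_cong[OF DERIV_diff[OF DERIV_const DERIV_ident]]) simp
  have "(f has_real_derivative f') (at ((\<lambda>s. a - s) s) within ((\<lambda>s. a - s) ` {0..<a-R2}))"
    using assms(1) unfolding img by simp
  from DERIV_image_chain[OF this dg] show ?thesis by (simp add: o_def)
qed

theorem lemma5p4:
  fixes a R1 R2 \<beta> Bbar :: real
    and \<psi> \<psi>' \<psi>'' :: "real \<Rightarrow> real"
    and z1 d1 dd1 z2 d2 dd2 :: "real \<Rightarrow> real \<Rightarrow> real"
  assumes a_pos: "a > 0"
    and R: "0 < R1" "R1 < R2" "R2 < a"
    and beta_pos: "\<beta> > 0"
    and psi_d1: "\<And>r. r \<in> {0..a} \<Longrightarrow> (\<psi> has_real_derivative \<psi>' r) (at r within {0..a})"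
    and psi_d2: "\<And>r. r \<in> {0..a} \<Longrightarrow> (\<psi>' has_real_derivative \<psi>'' r) (at r within {0..a})"
    and psi_C2: "continuous_on {0..a} \<psi>''"
    and psi_pos: "\<And>r. r \<in> {0..a} \<Longrightarrow> \<psi> r > 0"
    and Bbar_def: "Bbar = (SUP r\<in>{0..a}. \<bar>\<psi>'' r / \<psi> r - (\<psi>' r / \<psi> r)^2\<bar>)"
    and z1_d1: "\<And>B r. B > Bbar \<Longrightarrow> r \<in> {0..<R1} \<Longrightarrow>
        ((\<lambda>s. z1 s B) has_real_derivative d1 r B) (at r within {0..<R1})"
    and z1_d2: "\<And>B r. B > Bbar \<Longrightarrow> r \<in> {0..<R1} \<Longrightarrow>
        ((\<lambda>s. d1 s B) has_real_derivative dd1 r B) (at r within {0..<R1})"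
    and z1_ode: "\<And>B r. B > Bbar \<Longrightarrow> r \<in> {0..<R1} \<Longrightarrow>
        dd1 r B + (\<psi>' r / \<psi> r) * d1 r B
          + ((\<psi>'' r / \<psi> r - (\<psi>' r / \<psi> r)^2) - B) * z1 r B = 0"
    and z1_init: "\<And>B. B > Bbar \<Longrightarrow> z1 0 B = 0 \<and> d1 0 B = 1"
    and z2_d1: "\<And>B r. B > Bbar \<Longrightarrow> r \<in> {R2<..a} \<Longrightarrow>
        ((\<lambda>s. z2 s B) has_real_derivative d2 r B) (at r within {R2<..a})"
    and z2_d2: "\<And>B r. B > Bbar \<Longrightarrow> r \<in> {R2<..a} \<Longrightarrow>
        ((\<lambda>s. d2 s B) has_real_derivative dd2 r B) (at r within {R2<..a})"
    and z2_ode: "\<And>B r. B > Bbar \<Longrightarrow> r \<in> {R2<..a} \<Longrightarrow>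
        dd2 r B + (\<psi>' r / \<psi> r) * d2 r B
          + ((\<psi>'' r / \<psi> r - (\<psi>' r / \<psi> r)^2) - B) * z2 r B = 0"
    and z2_init: "\<And>B. B > Bbar \<Longrightarrow> z2 a B = \<beta> \<and> d2 a B = -1"
  shows "(\<forall>B>Bbar. \<forall>r\<in>{0<..<R1}. z1 r B > 0)
    \<and> (\<forall>B>Bbar. strict_mono_on {0..<R1} (\<lambda>r. z1 r B))
    \<and> (\<forall>r\<in>{0<..<R1}. strict_mono_on {Bbar<..} (\<lambda>B. z1 r B))
    \<and> (\<forall>r\<in>{0<..<R1}. filterlim (\<lambda>B. z1 r B) at_top at_top)
    \<and> (\<forall>B>Bbar. \<forall>r\<in>{R2<..<a}. z2 r B > \<beta>)
    \<and> (\<forall>B>Bbar. \<forall>r\<in>{R2<..<a}. \<forall>s\<in>{R2<..<a}. r < s \<longrightarrow> z2 s B < z2 r B)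
    \<and> (\<forall>r\<in>{R2<..<a}. strict_mono_on {Bbar<..} (\<lambda>B. z2 r B))
    \<and> (\<forall>r\<in>{R2<..<a}. filterlim (\<lambda>B. z2 r B) at_top at_top)"
  proof -
  define q where "q = (\<lambda>r. \<psi>'' r / \<psi> r - (\<psi>' r / \<psi> r)^2)"
  have cpsi: "continuous_on {0..a} \<psi>" unfolding continuous_on_eq_continuous_within
  proof
    fix s assume "s \<in> {0..a}"
    from DERIV_continuous[OF psi_d1[OF this]] show "continuous (at s within {0..a}) \<psi>" .
  qed
  have cpsi': "continuous_on {0..a} \<psi>'" unfolding continuous_on_eq_continuous_within
  proof
    fix s assume "s \<in> {0..a}"
    from DERIV_continuous[OF psi_d2[OF this]] show "continuous (at s within {0..a}) \<psi>'" .
  qed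
  have psi_nz: "\<forall>r\<in>{0..a}. \<psi> r \<noteq> 0" using psi_pos by fastforce
  have cq: "continuous_on {0..a} (\<lambda>r. \<bar>q r\<bar>)" unfolding q_def
    by (intro continuous_intros psi_C2 cpsi cpsi' psi_nz)
  have ne: "{0..a} \<noteq> {}" using a_pos by simp
  obtain x0 where x0: "x0 \<in> {0..a}" "\<And>y. y \<in> {0..a} \<Longrightarrow> \<bar>q y\<bar> \<le> \<bar>q x0\<bar>"
    using continuous_attains_sup[OF compact_Icc ne cq] by blast
  have bq: "bdd_above ((\<lambda>r. \<bar>q r\<bar>) ` {0..a})" by (rule bdd_aboveI2[of _ _ "\<bar>q x0\<bar>"]) (rule x0(2))
  have BbarE: "Bbar = (SUP r\<in>{0..a}. \<bar>q r\<bar>)" using Bbar_def unfolding q_def .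
  have qB: "\<bar>q r\<bar> \<le> Bbar" if "r \<in> {0..a}" for r
    unfolding BbarE by (rule cSUP_upper[OF that bq])
  obtain xm where xm: "xm \<in> {0..a}" "\<And>y. y \<in> {0..a} \<Longrightarrow> \<psi> xm \<le> \<psi> y"
    using continuous_attains_inf[OF compact_Icc ne cpsi] by blast
  obtain xM where xM: "xM \<in> {0..a}" "\<And>y. y \<in> {0..a} \<Longrightarrow> \<psi> y \<le> \<psi> xM"
    using continuous_attains_sup[OF compact_Icc ne cpsi] by blast
  define m where "m = \<psi> xm"
  define M where "M = \<psi> xM"
  have mp: "m > 0" unfolding m_def by (rule psi_pos[OF xm(1)])
  have mM: "m \<le> \<psi> r" "\<psi> r \<le> M" if "r \<in> {0..a}" for r
    unfolding m_def M_def using xm(2)[OF that] xM(2)[OF that] by auto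
  have Mp: "M > 0" using mM(2)[OF xm(1)] mp unfolding m_def by simp
  have eq_ode: "\<psi>' r * d + dd * \<psi> r = \<psi> r * (B - q r) * z"
    if r: "r \<in> {0..a}" and ode: "dd + (\<psi>' r / \<psi> r) * d + ((\<psi>'' r / \<psi> r - (\<psi>' r / \<psi> r)^2) - B) * z = 0"
    for r d dd z B
  proof -
    have e: "dd = - (\<psi>' r / \<psi> r) * d - (q r - B) * z" using ode unfolding q_def by (simp add: algebra_simps)
    have "\<psi> r \<noteq> 0" using psi_pos[OF r] by simp
    thus ?thesis unfolding e by (simp add: field_simps)
  qed
  have sol1: "sol R1 \<psi> (\<lambda>s. B - q s) (\<lambda>s. z1 s B) (\<lambda>s. d1 s B) 0" if B: "B > Bbar" for B
    unfolding sol_def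
  proof (intro conjI ballI)
    show "0 < R1" "(0::real) \<le> 0" using R by simp_all
    show "z1 0 B = 0" "d1 0 B = 1" using z1_init[OF B] by simp_all
    fix s assume s: "s \<in> {0..<R1}"
    hence sa: "s \<in> {0..a}" using R by auto
    show "\<psi> s > 0" by (rule psi_pos[OF sa])
    show "B - q s > 0" using qB[OF sa] B by linarith
    show "((\<lambda>s. z1 s B) has_real_derivative d1 s B) (at s within {0..<R1})" by (rule z1_d1[OF B s])
    have sub: "{0..<R1} \<subseteq> {0..a}" using R by auto
    show "((\<lambda>s. \<psi> s * d1 s B) has_real_derivative \<psi> s * (B - q s) * z1 s B) (at s within {0..<R1})"
      by (rule DERIV_cong[OF DERIV_mult[OF has_field_derivative_subset[OF psi_d1[OF sa] sub] z1_d2[OF B s]]])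
         (rule eq_ode[OF sa z1_ode[OF B s]])
  qed
  have sol2: "sol (a - R2) (\<lambda>s. \<psi> (a - s)) (\<lambda>s. B - q (a - s)) (\<lambda>s. z2 (a - s) B) (\<lambda>s. - d2 (a - s) B) \<beta>"
    if B: "B > Bbar" for B
    unfolding sol_def
  proof (intro conjI ballI)
    show "0 < a - R2" using R by simp
    show "0 \<le> \<beta>" using beta_pos by simp
    show "z2 (a - 0) B = \<beta>" "- d2 (a - 0) B = 1" using z2_init[OF B] by simp_all
    fix s assume s: "s \<in> {0..<a - R2}"
    hence r: "a - s \<in> {R2<..a}" by auto
    hence ra: "a - s \<in> {0..a}" using R by auto
    show "\<psi> (a - s) > 0" by (rule psi_pos[OF ra])
    show "B - q (a - s) > 0" using qB[OF ra] B by linarith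
    show "((\<lambda>s. z2 (a - s) B) has_real_derivative - d2 (a - s) B) (at s within {0..<a - R2})"
      by (rule refl_deriv[OF z2_d1[OF B r] s])
    have sub: "{R2<..a} \<subseteq> {0..a}" using R by auto
    define G where "G = (\<lambda>r. \<psi> r * d2 r B)"
    have Gd: "(G has_real_derivative \<psi> (a - s) * (B - q (a - s)) * z2 (a - s) B) (at (a - s) within {R2<..a})"
      unfolding G_def
      by (rule DERIV_cong[OF DERIV_mult[OF has_field_derivative_subset[OF psi_d1[OF ra] sub] z2_d2[OF B r]]])
         (rule eq_ode[OF ra z2_ode[OF B r]])
    have "((\<lambda>s. - G (a - s)) has_real_derivative - (- (\<psi> (a - s) * (B - q (a - s)) * z2 (a - s) B))) (at s within {0..<a - R2})"
      by (rule DERIV_minus[OF refl_deriv[OF Gd s]])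
    moreover have "(\<lambda>s. - G (a - s)) = (\<lambda>s. \<psi> (a - s) * - d2 (a - s) B)" unfolding G_def by (simp add: fun_eq_iff)
    ultimately show "((\<lambda>s. \<psi> (a - s) * - d2 (a - s) B) has_real_derivative \<psi> (a - s) * (B - q (a - s)) * z2 (a - s) B) (at s within {0..<a - R2})"
      by simp
  qed
  have lim_helper: "filterlim (\<lambda>B. f B) at_top at_top"
    if K: "K > 0" and f: "\<And>B. B > Bbar \<Longrightarrow> K * (B - Bbar) \<le> f B" for f :: "real \<Rightarrow> real" and K
  proof (rule filterlim_at_top_mono)
    have "filterlim (\<lambda>B. - Bbar + B) at_top at_top"
      by (rule filterlim_tendsto_add_at_top[OF tendsto_const filterlim_ident])
    hence "filterlim (\<lambda>B. B - Bbar) at_top at_top" by simp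
    thus "filterlim (\<lambda>B. K * (B - Bbar)) at_top at_top"
      by (rule filterlim_tendsto_pos_mult_at_top[OF tendsto_const K])
    show "eventually (\<lambda>B. K * (B - Bbar) \<le> f B) at_top"
      using eventually_gt_at_top[of Bbar] by eventually_elim (rule f)
  qed
  have P1: "\<forall>B>Bbar. \<forall>r\<in>{0<..<R1}. z1 r B > 0"
    using sol_mono(2)[OF sol1] by simp
  have P2: "\<forall>B>Bbar. strict_mono_on {0..<R1} (\<lambda>r. z1 r B)"
    using sol_mono(1)[OF sol1] by simp
  have P3: "\<forall>r\<in>{0<..<R1}. strict_mono_on {Bbar<..} (\<lambda>B. z1 r B)"
  proof (intro ballI strict_mono_onI)
    fix r B1 B2 assume r: "r \<in> {0<..<R1}" and B: "B1 \<in> {Bbar<..}" "B2 \<in> {Bbar<..}" "B1 < B2"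
    have "\<forall>r\<in>{0<..<R1}. z1 r B1 < z1 r B2"
      by (rule sol_cmp[OF sol1 sol1]) (use B in auto)
    thus "z1 r B1 < z1 r B2" using r by blast
  qed
  have P4: "\<forall>r\<in>{0<..<R1}. filterlim (\<lambda>B. z1 r B) at_top at_top"
  proof
    fix r assume r: "r \<in> {0<..<R1}"
    show "filterlim (\<lambda>B. z1 r B) at_top at_top"
    proof (rule lim_helper)
      show "m^2 / (6 * M^2) * r^3 > 0" using mp Mp r by simp
      fix B assume B: "B > Bbar"
      have "\<forall>r\<in>{0..<R1}. z1 r B \<ge> (B - Bbar) * m^2 / (6 * M^2) * r^3"
      proof (rule sol_lower[OF sol1[OF B] mp])
        show "0 \<le> B - Bbar" using B by simp
        fix s assume "s \<in> {0..<R1}"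
        hence sa: "s \<in> {0..a}" using R by auto
        show "m \<le> \<psi> s \<and> \<psi> s \<le> M \<and> B - Bbar \<le> B - q s" using mM[OF sa] qB[OF sa] by auto
      qed
      hence "z1 r B \<ge> (B - Bbar) * m^2 / (6 * M^2) * r^3" using r by auto
      thus "m^2 / (6 * M^2) * r^3 * (B - Bbar) \<le> z1 r B" by (simp add: algebra_simps)
    qed
  qed
  have P5: "\<forall>B>Bbar. \<forall>r\<in>{R2<..<a}. z2 r B > \<beta>"
  proof (intro allI impI ballI)
    fix B r assume B: "B > Bbar" and r: "r \<in> {R2<..<a}"
    have "a - r \<in> {0<..<a - R2}" using r by auto
    hence "z2 (a - (a - r)) B > \<beta>" using sol_mono(2)[OF sol2[OF B]] by blast
    thus "z2 r B > \<beta>" by simp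
  qed
  have P6: "\<forall>B>Bbar. \<forall>r\<in>{R2<..<a}. \<forall>s\<in>{R2<..<a}. r < s \<longrightarrow> z2 s B < z2 r B"
  proof (intro allI impI ballI)
    fix B r s assume B: "B > Bbar" and r: "r \<in> {R2<..<a}" and s: "s \<in> {R2<..<a}" and rs: "r < s"
    have "z2 (a - (a - s)) B < z2 (a - (a - r)) B"
      by (rule strict_mono_onD[OF sol_mono(1)[OF sol2[OF B]]]) (use r s rs in auto)
    thus "z2 s B < z2 r B" by simp
  qed
  have P7: "\<forall>r\<in>{R2<..<a}. strict_mono_on {Bbar<..} (\<lambda>B. z2 r B)"
  proof (intro ballI strict_mono_onI)
    fix r B1 B2 assume r: "r \<in> {R2<..<a}" and B: "B1 \<in> {Bbar<..}" "B2 \<in> {Bbar<..}" "B1 < B2"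
    have "\<forall>s\<in>{0<..<a - R2}. z2 (a - s) B1 < z2 (a - s) B2"
      by (rule sol_cmp[OF sol2 sol2]) (use B in auto)
    moreover have "a - r \<in> {0<..<a - R2}" using r by auto
    ultimately have "z2 (a - (a - r)) B1 < z2 (a - (a - r)) B2" by blast
    thus "z2 r B1 < z2 r B2" by simp
  qed
  have P8: "\<forall>r\<in>{R2<..<a}. filterlim (\<lambda>B. z2 r B) at_top at_top"
  proof
    fix r assume r: "r \<in> {R2<..<a}"
    show "filterlim (\<lambda>B. z2 r B) at_top at_top"
    proof (rule lim_helper)
      show "m^2 / (6 * M^2) * (a - r)^3 > 0" using mp Mp r by simp
      fix B assume B: "B > Bbar"
      have "\<forall>s\<in>{0..<a - R2}. z2 (a - s) B \<ge> (B - Bbar) * m^2 / (6 * M^2) * s^3"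
      proof (rule sol_lower[OF sol2[OF B] mp])
        show "0 \<le> B - Bbar" using B by simp
        fix s assume "s \<in> {0..<a - R2}"
        hence sa: "a - s \<in> {0..a}" using R by auto
        show "m \<le> \<psi> (a - s) \<and> \<psi> (a - s) \<le> M \<and> B - Bbar \<le> B - q (a - s)" using mM[OF sa] qB[OF sa] by auto
      qed
      moreover have "a - r \<in> {0..<a - R2}" using r by auto
      ultimately have "z2 (a - (a - r)) B \<ge> (B - Bbar) * m^2 / (6 * M^2) * (a - r)^3" by blast
      thus "m^2 / (6 * M^2) * (a - r)^3 * (B - Bbar) \<le> z2 r B" by (simp add: algebra_simps)
    qed
  qed
  show ?thesis using P1 P2 P3 P4 P5 P6 P7 P8 by blast
qed

end
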